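(* For every $\phi\in\mathcal{L}_{\Box\!\!\rightarrow}$ and every $(\Gamma,\Delta)\in W_c$: (1) $\mathcal{M}_c,(\Gamma,\Delta)\models^+\phi$ iff $\phi\in\Gamma$; (2) $\mathcal{M}_c,(\Gamma,\Delta)\models^-\phi$ iff $\sim\phi\in\Gamma$.
   Context: $\mathcal{L}_{\Box\!\!\rightarrow}$ is built from propositional variables with $\wedge,\vee,\to$, strong negation $\sim$, and a binary would-conditional $\Box\!\!\rightarrow$; $\phi\Diamond\!\!\rightarrow\psi$ abbreviates $\sim(\phi\Box\!\!\rightarrow\sim\psi)$. Abbreviations: $\leftrightarrow$ is mutual $\to$; $\phi\Rightarrow\psi:=(\phi\to\psi)\wedge(\sim\psi\to\sim\phi)$; $\phi\Leftrightarrow\psi:=(\phi\Rightarrow\psi)\wedge(\psi\Rightarrow\phi)$. $\mathbb{N}4\mathbb{CK}$: modus ponens; positive intuitionistic schemes; $\sim\sim\phi\leftrightarrow\phi$, $\sim(\phi\wedge\psi)\leftrightarrow(\sim\phi\vee\sim\psi)$, $\sim(\phi\vee\psi)\leftrightarrow(\sim\phi\wedge\sim\psi)$, $\sim(\phi\to\psi)\leftrightarrow(\phi\wedge\sim\psi)$; (A1) $((\phi\Box\!\!\rightarrow\psi)\wedge(\phi\Box\!\!\rightarrow\chi))\Leftrightarrow(\phi\Box\!\!\rightarrow(\psi\wedge\chi))$; (A2) $(\sim(\phi\Box\!\!\rightarrow\psi)\wedge(\phi\Box\!\!\rightarrow\chi))\to\sim(\phi\Box\!\!\rightarrow(\psi\vee\sim\chi))$;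 (A3) $((\phi\Diamond\!\!\rightarrow\psi)\to(\phi\Box\!\!\rightarrow\chi))\to(\phi\Box\!\!\rightarrow(\psi\to\chi))$; (A4) $\phi\Box\!\!\rightarrow(\psi\to\psi)$; rules: from $\phi\Leftrightarrow\psi$ infer $(\phi\Box\!\!\rightarrow\chi)\Leftrightarrow(\psi\Box\!\!\rightarrow\chi)$; from $\phi\leftrightarrow\psi$ infer $(\chi\Box\!\!\rightarrow\phi)\leftrightarrow(\chi\Box\!\!\rightarrow\psi)$; from $\sim\phi\leftrightarrow\sim\psi$ infer $\sim(\chi\Box\!\!\rightarrow\phi)\leftrightarrow\sim(\chi\Box\!\!\rightarrow\psi)$. $\Gamma\vdash\Delta$ means some nonempty finite disjunction of members of $\Delta$ is derivable from $\Gamma$ and theorems by modus ponens; $(\Gamma,\Delta)$ is maximal iff $\Gamma\not\vdash\Delta$ and $\Gamma\cup\Delta=\mathcal{L}_{\Box\!\!\rightarrow}$. Canonical model $\mathcal{M}_c$: $W_c$ = maximal bi-sets; $(\Gamma_0,\Delta_0)\leq_c(\Gamma_1,\Delta_1)$ iff $\Gamma_0\subseteq\Gamma_1$; $((\Gamma_0,\Delta_0),(X,Y),(\Gamma_1,\Delta_1))\in R_c$ iff for some $\phi$: $X=\{(\Gamma,\Delta)\in W_c\mid\phi\in\Gamma\}$, $Y=\{(\Gamma,\Delta)\in W_c\mid\sim\phi\in\Gamma\}$, $\{\psi\mid\phi\Box\!\!\rightarrow\psi\in\Gamma_0\}\subseteq\Gamma_1$, $\{\sim(\phi\Box\!\!\rightarrow\psi)\mid\sim\psi\in\Gamma_1\}\subseteq\Gamma_0$;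 $V^+_c(p)=\{(\Gamma,\Delta)\mid p\in\Gamma\}$, $V^-_c(p)=\{(\Gamma,\Delta)\mid\sim p\in\Gamma\}$. Verification $\models^+$ / falsification $\models^-$: atoms by $V^\pm$; $\wedge$ verified iff both verified, falsified iff one falsified; $\vee$ dually; $\sim$ swaps $\models^+,\models^-$; $w\models^+\psi\to\chi$ iff for all $v\geq w$, $v\models^+\psi$ implies $v\models^+\chi$; $w\models^-\psi\to\chi$ iff $w\models^+\psi$ and $w\models^-\chi$; $w\models^+\psi\Box\!\!\rightarrow\chi$ iff for all $v\geq w$ and $u$ with $R_{\|\psi\|}(v,u)$, $u\models^+\chi$; $w\models^-\psi\Box\!\!\rightarrow\chi$ iff some $u$ has $R_{\|\psi\|}(w,u)$ and $u\models^-\chi$, where $\|\psi\|=(\{w\mid w\models^+\psi\},\{w\mid w\models^-\psi\})$. *)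

theory Defs
  imports Main
begin

datatype 'a fm =
    Atom 'a
  | Conj "'a fm" "'a fm"
  | Disj "'a fm" "'a fm"
  | Imp "'a fm" "'a fm"
  | Neg "'a fm"            (* strong negation \<sim> *)
  | Box "'a fm" "'a fm"    (* would-conditional *)

definition Dia :: "'a fm \<Rightarrow> 'a fm \<Rightarrow> 'a fm" where
  "Dia a b = Neg (Box a (Neg b))"

definition Iff :: "'a fm \<Rightarrow> 'a fm \<Rightarrow> 'a fm" where
  "Iff a b = Conj (Imp a b) (Imp b a)"

definition SImp :: "'a fm \<Rightarrow> 'a fm \<Rightarrow> 'a fm" where
  "SImp a b = Conj (Imp a b) (Imp (Neg b) (Neg a))"

definition SIff :: "'a fm \<Rightarrow> 'a fm \<Rightarrow> 'a fm" where
  "SIff a b = Conj (SImp a b) (SImp b a)"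

inductive axiom :: "'a fm \<Rightarrow> bool" where
  ax_K: "axiom (Imp p (Imp q p))"
| ax_S: "axiom (Imp (Imp p (Imp q r)) (Imp (Imp p q) (Imp p r)))"
| ax_C1: "axiom (Imp (Conj p q) p)"
| ax_C2: "axiom (Imp (Conj p q) q)"
| ax_C3: "axiom (Imp p (Imp q (Conj p q)))"
| ax_D1: "axiom (Imp p (Disj p q))"
| ax_D2: "axiom (Imp q (Disj p q))"
| ax_D3: "axiom (Imp (Imp p r) (Imp (Imp q r) (Imp (Disj p q) r)))"
| ax_NN: "axiom (Iff (Neg (Neg p)) p)"
| ax_NC: "axiom (Iff (Neg (Conj p q)) (Disj (Neg p) (Neg q)))"
| ax_ND: "axiom (Iff (Neg (Disj p q)) (Conj (Neg p) (Neg q)))"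
| ax_NI: "axiom (Iff (Neg (Imp p q)) (Conj p (Neg q)))"
| ax_A1: "axiom (SIff (Conj (Box p q) (Box p r)) (Box p (Conj q r)))"
| ax_A2: "axiom (Imp (Conj (Neg (Box p q)) (Box p r)) (Neg (Box p (Disj q (Neg r)))))"
| ax_A3: "axiom (Imp (Imp (Dia p q) (Box p r)) (Box p (Imp q r)))"
| ax_A4: "axiom (Box p (Imp q q))"

inductive theorem_of :: "'a fm \<Rightarrow> bool" where
  thm_ax: "axiom p \<Longrightarrow> theorem_of p"
| thm_mp: "theorem_of p \<Longrightarrow> theorem_of (Imp p q) \<Longrightarrow> theorem_of q"
| thm_RA: "theorem_of (SIff p q) \<Longrightarrow> theorem_of (SIff (Box p r) (Box q r))"
| thm_RC: "theorem_of (Iff p q) \<Longrightarrow> theorem_of (Iff (Box r p) (Box r q))"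
| thm_RN: "theorem_of (Iff (Neg p) (Neg q)) \<Longrightarrow> theorem_of (Iff (Neg (Box r p)) (Neg (Box r q)))"

inductive derives :: "'a fm set \<Rightarrow> 'a fm \<Rightarrow> bool" where
  der_hyp: "p \<in> G \<Longrightarrow> derives G p"
| der_thm: "theorem_of p \<Longrightarrow> derives G p"
| der_mp: "derives G p \<Longrightarrow> derives G (Imp p q) \<Longrightarrow> derives G q"

fun disjs :: "'a fm list \<Rightarrow> 'a fm" where
  "disjs [] = Atom undefined"   (* never used: disjunctions are nonempty *)
| "disjs [p] = p"
| "disjs (p # ps) = Disj p (disjs ps)"

definition bider :: "'a fm set \<Rightarrow> 'a fm set \<Rightarrow> bool" where
  "bider G D \<longleftrightarrow> (\<exists>ds. ds \<noteq> [] \<and> set ds \<subseteq> D \<and> derives G (disjs ds))"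

definition maximal :: "'a fm set \<times> 'a fm set \<Rightarrow> bool" where
  "maximal GD \<longleftrightarrow> \<not> bider (fst GD) (snd GD) \<and> fst GD \<union> snd GD = UNIV"

record ('w, 'a) model =
  W :: "'w set"
  le :: "'w \<Rightarrow> 'w \<Rightarrow> bool"
  R :: "'w \<Rightarrow> 'w set \<times> 'w set \<Rightarrow> 'w \<Rightarrow> bool"
  Vp :: "'a \<Rightarrow> 'w set"
  Vn :: "'a \<Rightarrow> 'w set"

text \<open>\<open>sat M \<phi> True w\<close>: verification; \<open>sat M \<phi> False w\<close>: falsification.\<close>
primrec sat :: "('w, 'a) model \<Rightarrow> 'a fm \<Rightarrow> bool \<Rightarrow> 'w \<Rightarrow> bool" where
  "sat M (Atom p) pol w = (if pol then w \<in> Vp M p else w \<in> Vn M p)"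
| "sat M (Conj a b) pol w =
     (if pol then sat M a True w \<and> sat M b True w else sat M a False w \<or> sat M b False w)"
| "sat M (Disj a b) pol w =
     (if pol then sat M a True w \<or> sat M b True w else sat M a False w \<and> sat M b False w)"
| "sat M (Neg a) pol w = sat M a (\<not> pol) w"
| "sat M (Imp a b) pol w =
     (if pol then (\<forall>v\<in>W M. le M w v \<longrightarrow> sat M a True v \<longrightarrow> sat M b True v)
      else sat M a True w \<and> sat M b False w)"
| "sat M (Box a b) pol w =
     (if pol then (\<forall>v\<in>W M. le M w v \<longrightarrow>
          (\<forall>u\<in>W M. R M v ({x\<in>W M. sat M a True x}, {x\<in>W M. sat M a False x}) u \<longrightarrow> sat M b True u))
      else (\<exists>u\<in>W M. R M w ({x\<in>W M. sat M a True x}, {x\<in>W M. sat M a False x}) u \<and> sat M b False u))"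

type_synonym 'a bset = "'a fm set \<times> 'a fm set"

definition Wc :: "'a bset set" where
  "Wc = {GD. maximal GD}"

definition lec :: "'a bset \<Rightarrow> 'a bset \<Rightarrow> bool" where
  "lec w v \<longleftrightarrow> fst w \<subseteq> fst v"

definition Rc :: "'a bset \<Rightarrow> 'a bset set \<times> 'a bset set \<Rightarrow> 'a bset \<Rightarrow> bool" where
  "Rc w XY v \<longleftrightarrow> w \<in> Wc \<and> v \<in> Wc \<and>
     (\<exists>\<phi>. fst XY = {GD \<in> Wc. \<phi> \<in> fst GD} \<and> snd XY = {GD \<in> Wc. Neg \<phi> \<in> fst GD}
        \<and> {\<psi>. Box \<phi> \<psi> \<in> fst w} \<subseteq> fst v
        \<and> {Neg (Box \<phi> \<psi>) | \<psi>. Neg \<psi> \<in> fst v} \<subseteq> fst w)"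

definition Mc :: "('a bset, 'a) model" where
  "Mc = \<lparr> W = Wc, le = lec, R = Rc,
          Vp = (\<lambda>p. {GD \<in> Wc. Atom p \<in> fst GD}),
          Vn = (\<lambda>p. {GD \<in> Wc. Neg (Atom p) \<in> fst GD}) \<rparr>"

end

theory Submission
  imports Defs
begin


lemma der_mono: "derives G p \<Longrightarrow> G \<subseteq> H \<Longrightarrow> derives H p"
  by (induction rule: derives.induct) (auto intro: derives.intros)

lemma der_ax: "axiom p \<Longrightarrow> derives G p"
  by (simp add: der_thm thm_ax)

lemma der_imp_refl: "derives G (Imp p p)"
proof -
  have "derives G (Imp (Imp p (Imp (Imp p p) p)) (Imp (Imp p (Imp p p)) (Imp p p)))" by (rule der_ax, rule ax_S)
  moreover have "derives G (Imp p (Imp (Imp p p) p))" by (rule der_ax, rule ax_K)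
  ultimately have "derives G (Imp (Imp p (Imp p p)) (Imp p p))" using der_mp by blast
  moreover have "derives G (Imp p (Imp p p))" by (rule der_ax, rule ax_K)
  ultimately show ?thesis using der_mp by blast
qed

lemma deduction: "derives (insert p G) q \<Longrightarrow> derives G (Imp p q)"
proof (induction "insert p G" q rule: derives.induct)
  case (der_hyp q)
  then show ?case
  proof (cases "q = p")
    case True then show ?thesis using der_imp_refl by simp
  next
    case False then have "q \<in> G" using der_hyp by simp
    then show ?thesis using derives.der_mp[OF derives.der_hyp[where p=q and G=G] der_ax[OF ax_K[of q p]]] by simp
  qed
next
  case (der_thm q)
  then show ?case using derives.der_mp[OF derives.der_thm[where p=q and G=G] der_ax[OF ax_K[of q p]]] by simp
next
  case (der_mp q r)
  have "derives G (Imp (Imp p (Imp q r)) (Imp (Imp p q) (Imp p r)))" by (rule der_ax, rule ax_S)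
  then show ?case using der_mp derives.der_mp by blast
qed

lemma undeduction: "derives G (Imp p q) \<Longrightarrow> derives (insert p G) q"
  by (meson der_hyp der_mono der_mp insertI1 subset_insertI)

lemma der_empty: "derives G p \<Longrightarrow> G = {} \<Longrightarrow> theorem_of p"
  by (induction rule: derives.induct) (auto intro: theorem_of.intros)

lemma thmI: "derives {p} q \<Longrightarrow> theorem_of (Imp p q)"
  using deduction der_empty by blast

lemma thmD: "theorem_of (Imp p q) \<Longrightarrow> derives G p \<Longrightarrow> derives G q"
  using der_mp der_thm by blast

lemma hyp: "derives (insert p G) p"
  by (simp add: der_hyp)

lemma cI: "derives G p \<Longrightarrow> derives G q \<Longrightarrow> derives G (Conj p q)"
  by (meson der_ax der_mp ax_C3)
lemma cE1: "derives G (Conj p q) \<Longrightarrow> derives G p"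
  by (meson der_ax der_mp ax_C1)
lemma cE2: "derives G (Conj p q) \<Longrightarrow> derives G q"
  by (meson der_ax der_mp ax_C2)
lemma dI1: "derives G p \<Longrightarrow> derives G (Disj p q)"
  by (meson der_ax der_mp ax_D1)
lemma dI2: "derives G q \<Longrightarrow> derives G (Disj p q)"
  by (meson der_ax der_mp ax_D2)
lemma dE: "derives G (Disj p q) \<Longrightarrow> derives G (Imp p r) \<Longrightarrow> derives G (Imp q r) \<Longrightarrow> derives G r"
  by (meson der_ax der_mp ax_D3)
lemma dE': "derives G (Disj p q) \<Longrightarrow> derives (insert p G) r \<Longrightarrow> derives (insert q G) r \<Longrightarrow> derives G r"
  using dE deduction by blast

lemma axiff1: "axiom (Iff p q) \<Longrightarrow> derives G p \<Longrightarrow> derives G q"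
  unfolding Iff_def by (meson der_ax der_mp cE1)
lemma axiff2: "axiom (Iff p q) \<Longrightarrow> derives G q \<Longrightarrow> derives G p"
  unfolding Iff_def by (meson der_ax der_mp cE2)
lemma thiff1: "theorem_of (Iff p q) \<Longrightarrow> derives G p \<Longrightarrow> derives G q"
  unfolding Iff_def by (meson der_thm der_mp cE1)
lemma thiff2: "theorem_of (Iff p q) \<Longrightarrow> derives G q \<Longrightarrow> derives G p"
  unfolding Iff_def by (meson der_thm der_mp cE2)

lemma NN1: "derives G (Neg (Neg p)) \<Longrightarrow> derives G p" by (rule axiff1[OF ax_NN])
lemma NN2: "derives G p \<Longrightarrow> derives G (Neg (Neg p))" by (rule axiff2[OF ax_NN])
lemma NC1: "derives G (Neg (Conj p q)) \<Longrightarrow> derives G (Disj (Neg p) (Neg q))" by (rule axiff1[OF ax_NC])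
lemma NC2: "derives G (Disj (Neg p) (Neg q)) \<Longrightarrow> derives G (Neg (Conj p q))" by (rule axiff2[OF ax_NC])
lemma ND1: "derives G (Neg (Disj p q)) \<Longrightarrow> derives G (Conj (Neg p) (Neg q))" by (rule axiff1[OF ax_ND])
lemma ND2: "derives G (Conj (Neg p) (Neg q)) \<Longrightarrow> derives G (Neg (Disj p q))" by (rule axiff2[OF ax_ND])
lemma NI1: "derives G (Neg (Imp p q)) \<Longrightarrow> derives G (Conj p (Neg q))" by (rule axiff1[OF ax_NI])
lemma NI2: "derives G (Conj p (Neg q)) \<Longrightarrow> derives G (Neg (Imp p q))" by (rule axiff2[OF ax_NI])

lemma thm_conj: "theorem_of p \<Longrightarrow> theorem_of q \<Longrightarrow> theorem_of (Conj p q)"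
  using cI der_thm der_empty by blast

lemma thm_iff: "theorem_of (Imp p q) \<Longrightarrow> theorem_of (Imp q p) \<Longrightarrow> theorem_of (Iff p q)"
  unfolding Iff_def by (rule thm_conj)

lemma thm_siff: "theorem_of (Imp p q) \<Longrightarrow> theorem_of (Imp q p) \<Longrightarrow>
   theorem_of (Imp (Neg p) (Neg q)) \<Longrightarrow> theorem_of (Imp (Neg q) (Neg p)) \<Longrightarrow> theorem_of (SIff p q)"
  unfolding SIff_def SImp_def by (intro thm_conj)

lemma siff_imp: "theorem_of (SIff p q) \<Longrightarrow> derives G p \<Longrightarrow> derives G q"
  unfolding SIff_def SImp_def by (meson der_thm der_mp cE1)
lemma siff_imp2: "theorem_of (SIff p q) \<Longrightarrow> derives G q \<Longrightarrow> derives G p"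
  unfolding SIff_def SImp_def by (meson der_thm der_mp cE1 cE2)
lemma siff_nimp: "theorem_of (SIff p q) \<Longrightarrow> derives G (Neg p) \<Longrightarrow> derives G (Neg q)"
  unfolding SIff_def SImp_def by (meson der_thm der_mp cE1 cE2)
lemma siff_nimp2: "theorem_of (SIff p q) \<Longrightarrow> derives G (Neg q) \<Longrightarrow> derives G (Neg p)"
  unfolding SIff_def SImp_def by (meson der_thm der_mp cE1 cE2)

lemma axsiff_imp: "axiom (SIff p q) \<Longrightarrow> derives G p \<Longrightarrow> derives G q"
  using siff_imp thm_ax by blast
lemma axsiff_imp2: "axiom (SIff p q) \<Longrightarrow> derives G q \<Longrightarrow> derives G p"
  using siff_imp2 thm_ax by blast
lemma axsiff_nimp: "axiom (SIff p q) \<Longrightarrow> derives G (Neg p) \<Longrightarrow> derives G (Neg q)"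
  using siff_nimp thm_ax by blast
lemma axsiff_nimp2: "axiom (SIff p q) \<Longrightarrow> derives G (Neg q) \<Longrightarrow> derives G (Neg p)"
  using siff_nimp2 thm_ax by blast



lemma disjs_in: "d \<in> set E \<Longrightarrow> derives G (Imp d (disjs E))"
proof (induction E rule: disjs.induct)
  case 1 then show ?case by simp
next
  case (2 p) then show ?case by (simp add: der_imp_refl)
next
  case (3 p v va)
  show ?case
  proof (cases "d = p")
    case True then show ?thesis by (simp add: deduction dI1 hyp)
  next
    case False
    then have "derives G (Imp d (disjs (v # va)))" using 3 by simp
    then show ?thesis by (simp add: deduction dI2 undeduction)
  qed
qed

lemma disjs_elim: "ds \<noteq> [] \<Longrightarrow> \<forall>d\<in>set ds. derives G (Imp d X) \<Longrightarrow> derives G (Imp (disjs ds) X)"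
proof (induction ds rule: disjs.induct)
  case 1 then show ?case by simp
next
  case (2 p) then show ?case by simp
next
  case (3 p v va)
  then have a: "derives G (Imp (disjs (v # va)) X)" and b: "derives G (Imp p X)" by auto
  show ?case
    apply (simp)
    apply (rule deduction)
    apply (rule dE[OF hyp])
     apply (rule der_mono[OF b], blast)
    apply (rule der_mono[OF a], blast)
    done
qed

lemma disjs_sub: "set es \<subseteq> set E \<Longrightarrow> es \<noteq> [] \<Longrightarrow> derives G (Imp (disjs es) (disjs E))"
proof -
  assume "set es \<subseteq> set E" "es \<noteq> []"
  then show ?thesis by (intro disjs_elim) (auto intro: disjs_in)
qed

fun imps :: "'a fm list \<Rightarrow> 'a fm \<Rightarrow> 'a fm" where
  "imps [] c = c"
| "imps (q # qs) c = Imp q (imps qs c)"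

lemma imps_D: "derives G (imps qs t) \<Longrightarrow> derives (G \<union> set qs) t"
proof (induction qs arbitrary: G)
  case Nil then show ?case by simp
next
  case (Cons q qs)
  then have "derives (insert q G) (imps qs t)" by (simp add: undeduction)
  then have "derives (insert q G \<union> set qs) t" using Cons by blast
  then show ?case by simp
qed

lemma imps_I: "derives (G \<union> set qs) t \<Longrightarrow> derives G (imps qs t)"
proof (induction qs arbitrary: G)
  case Nil then show ?case by simp
next
  case (Cons q qs)
  then have "derives (insert q G \<union> set qs) t" by simp
  then have "derives (insert q G) (imps qs t)" using Cons by blast
  then show ?case by (simp add: deduction)
qed

lemma compact: "derives H t \<Longrightarrow> H \<subseteq> G \<union> S \<Longrightarrow> \<exists>qs. set qs \<subseteq> S \<and> derives G (imps qs t)"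
proof (induction rule: derives.induct)
  case (der_hyp p H)
  then show ?case
  proof (cases "p \<in> G")
    case True then show ?thesis by (intro exI[of _ "[]"]) (simp add: derives.der_hyp)
  next
    case False then have "p \<in> S" using der_hyp by auto
    then show ?thesis by (intro exI[of _ "[p]"]) (simp add: der_imp_refl)
  qed
next
  case (der_thm p H)
  then show ?case by (intro exI[of _ "[]"]) (simp add: derives.der_thm)
next
  case (der_mp H p q)
  then obtain qs1 qs2 where q1: "set qs1 \<subseteq> S" "derives G (imps qs1 p)"
     and q2: "set qs2 \<subseteq> S" "derives G (imps qs2 (Imp p q))" by blast
  have "derives (G \<union> set (qs1 @ qs2)) p" by (rule der_mono[OF imps_D[OF q1(2)]]) auto
  moreover have "derives (G \<union> set (qs1 @ qs2)) (Imp p q)" by (rule der_mono[OF imps_D[OF q2(2)]]) auto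
  ultimately have "derives (G \<union> set (qs1 @ qs2)) q" using derives.der_mp by blast
  then have "derives G (imps (qs1 @ qs2) q)" by (rule imps_I)
  moreover have "set (qs1 @ qs2) \<subseteq> S" using q1 q2 by simp
  ultimately show ?case by blast
qed

lemma bider_single: "bider G {b} \<Longrightarrow> derives G b"
proof -
  assume "bider G {b}"
  then obtain ds where ds: "ds \<noteq> []" "set ds \<subseteq> {b}" "derives G (disjs ds)" unfolding bider_def by blast
  have "derives G (Imp (disjs ds) (disjs [b]))" using ds by (intro disjs_sub) auto
  then show ?thesis using ds der_mp by fastforce
qed

lemma wc_not_bider: "w \<in> Wc \<Longrightarrow> \<not> bider (fst w) (snd w)"
  by (simp add: Wc_def maximal_def)

lemma wc_closed: "w \<in> Wc \<Longrightarrow> derives (fst w) p \<Longrightarrow> p \<in> fst w"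
proof (rule ccontr)
  assume a: "w \<in> Wc" "derives (fst w) p" "p \<notin> fst w"
  then have "p \<in> snd w" unfolding Wc_def maximal_def by auto
  then have "bider (fst w) (snd w)" unfolding bider_def using a by (intro exI[of _ "[p]"]) simp
  then show False using a unfolding Wc_def maximal_def by auto
qed

lemma wc_mem: "w \<in> Wc \<Longrightarrow> p \<in> fst w \<Longrightarrow> derives (fst w) p"
  by (simp add: der_hyp)

lemma wc_disj_sub: "w \<in> Wc \<Longrightarrow> p \<in> snd w \<longleftrightarrow> p \<notin> fst w"
proof -
  assume a: "w \<in> Wc"
  have "p \<in> snd w \<Longrightarrow> p \<in> fst w \<Longrightarrow> False"
  proof -
    assume "p \<in> snd w" "p \<in> fst w"
    then have "bider (fst w) (snd w)" unfolding bider_def by (intro exI[of _ "[p]"]) (simp add: der_hyp)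
    then show False using a unfolding Wc_def maximal_def by auto
  qed
  then show ?thesis using a unfolding Wc_def maximal_def by auto
qed

lemma wc_disjs: "w \<in> Wc \<Longrightarrow> disjs ds \<in> fst w \<Longrightarrow> ds \<noteq> [] \<Longrightarrow> \<exists>d\<in>set ds. d \<in> fst w"
proof (rule ccontr)
  assume a: "w \<in> Wc" "disjs ds \<in> fst w" "ds \<noteq> []" "\<not> (\<exists>d\<in>set ds. d \<in> fst w)"
  then have "set ds \<subseteq> snd w" using wc_disj_sub by blast
  then have "bider (fst w) (snd w)" unfolding bider_def using a der_hyp by blast
  then show False using a wc_not_bider by blast
qed

lemma wc_disj: "w \<in> Wc \<Longrightarrow> Disj p q \<in> fst w \<Longrightarrow> p \<in> fst w \<or> q \<in> fst w"
  using wc_disjs[of w "[p,q]"] by auto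



lemma lindenbaum:
  assumes nb: "\<not> bider G0 D0"
  shows "\<exists>w\<in>Wc. G0 \<subseteq> fst w \<and> D0 \<subseteq> snd w"
proof -
  define F where "F = {G. G0 \<subseteq> G \<and> \<not> bider G D0}"
  have "\<forall>C\<in>chains F. \<exists>U\<in>F. \<forall>X\<in>C. X \<subseteq> U"
  proof
    fix C assume C: "C \<in> chains F"
    show "\<exists>U\<in>F. \<forall>X\<in>C. X \<subseteq> U"
    proof (cases "C = {}")
      case True then show ?thesis using nb F_def by auto
    next
      case False
      have "\<Union>C \<in> F"
      proof -
        obtain X where "X \<in> C" using False by blast
        then have "G0 \<subseteq> X" using C F_def unfolding chains_def by blast
        then have "G0 \<subseteq> \<Union>C" using \<open>X \<in> C\<close> by blast
        moreover have "\<not> bider (\<Union>C) D0"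
        proof
          assume "bider (\<Union>C) D0"
          then obtain ds where ds: "ds \<noteq> []" "set ds \<subseteq> D0" "derives (\<Union>C) (disjs ds)"
            unfolding bider_def by blast
          then obtain qs where qs: "set qs \<subseteq> \<Union>C" "derives {} (imps qs (disjs ds))"
            using compact[OF ds(3), of "{}" "\<Union>C"] by auto
          obtain M where M: "M \<in> C" "set qs \<subseteq> M"
            using finite_subset_Union_chain[of "set qs" C F] qs False C
            by (metis List.finite_set chains_alt_def mem_Collect_eq)
          have "derives M (disjs ds)" using imps_D[OF qs(2)] der_mono M by fastforce
          then have "bider M D0" using ds bider_def by blast
          moreover have "M \<in> F" using M C unfolding chains_def by blast
          ultimately show False unfolding F_def by blast
        qed
        ultimately show ?thesis using F_def by simp
      qed
      then show ?thesis by blast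
    qed
  qed
  then obtain M where M: "M \<in> F" and Mmax: "\<forall>X\<in>F. M \<subseteq> X \<longrightarrow> X = M"
    using Zorn_Lemma2[of F] by blast
  have nbM: "\<not> bider M D0" and G0M: "G0 \<subseteq> M" using M F_def by auto
  have "\<not> bider M (- M)"
  proof
    assume "bider M (- M)"
    then obtain ds where ds: "ds \<noteq> []" "set ds \<subseteq> - M" "derives M (disjs ds)"
      unfolding bider_def by blast
    have "\<forall>d\<in>set ds. bider (insert d M) D0"
    proof
      fix d assume "d \<in> set ds"
      then have "d \<notin> M" using ds by auto
      then have "insert d M \<notin> F" using Mmax by blast
      then show "bider (insert d M) D0" using G0M F_def by auto
    qed
    then have "\<forall>d\<in>set ds. \<exists>es. es \<noteq> [] \<and> set es \<subseteq> D0 \<and> derives (insert d M) (disjs es)"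
      unfolding bider_def by blast
    then obtain es where es: "\<forall>d\<in>set ds. es d \<noteq> [] \<and> set (es d) \<subseteq> D0 \<and> derives (insert d M) (disjs (es d))"
      by metis
    define E where "E = concat (map es ds)"
    have E1: "E \<noteq> []" using ds es E_def by (cases ds) auto
    have E2: "set E \<subseteq> D0" using es E_def by auto
    have "\<forall>d\<in>set ds. derives M (Imp d (disjs E))"
    proof
      fix d assume d: "d \<in> set ds"
      have "set (es d) \<subseteq> set E" using d E_def by auto
      then have "derives (insert d M) (Imp (disjs (es d)) (disjs E))" using disjs_sub es d by blast
      then have "derives (insert d M) (disjs E)" using es d der_mp by blast
      then show "derives M (Imp d (disjs E))" by (rule deduction)
    qed
    then have "derives M (Imp (disjs ds) (disjs E))" using disjs_elim ds by blast
    then have "derives M (disjs E)" using ds der_mp by blast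
    then have "bider M D0" using E1 E2 bider_def by blast
    then show False using nbM by blast
  qed
  then have w: "(M, -M) \<in> Wc" unfolding Wc_def maximal_def by auto
  have "D0 \<subseteq> - M"
  proof
    fix d assume "d \<in> D0"
    show "d \<in> - M"
    proof
      assume "d \<in> M"
      then have "bider M D0" unfolding bider_def using \<open>d \<in> D0\<close>
        by (intro exI[of _ "[d]"]) (simp add: der_hyp)
      then show False using nbM by blast
    qed
  qed
  then show ?thesis using w G0M by force
qed



lemma BM: "theorem_of (Imp p q) \<Longrightarrow> theorem_of (Imp (Box r p) (Box r q))"
proof -
  assume pq: "theorem_of (Imp p q)"
  have "theorem_of (Imp p (Conj p q))"
    by (rule thmI, rule cI[OF hyp thmD[OF pq hyp]])
  moreover have "theorem_of (Imp (Conj p q) p)" by (rule thmI, rule cE1[OF hyp])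
  ultimately have "theorem_of (Iff p (Conj p q))" by (rule thm_iff)
  then have rc: "theorem_of (Iff (Box r p) (Box r (Conj p q)))" by (rule thm_RC)
  show ?thesis
    by (rule thmI, rule cE2[OF axsiff_imp2[OF ax_A1 thiff1[OF rc hyp]]])
qed

lemma BK: "derives G (Box r (Imp p q)) \<Longrightarrow> derives G (Box r p) \<Longrightarrow> derives G (Box r q)"
proof -
  assume a: "derives G (Box r (Imp p q))" "derives G (Box r p)"
  have t: "theorem_of (Imp (Conj (Imp p q) p) q)"
    by (rule thmI, rule der_mp[OF cE2[OF hyp] cE1[OF hyp]])
  show ?thesis
    by (rule thmD[OF BM[OF t] axsiff_imp[OF ax_A1 cI[OF a]]])
qed

lemma BT: "theorem_of p \<Longrightarrow> derives G (Box r p)"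
proof -
  assume p: "theorem_of p"
  have "theorem_of (Imp (Imp p p) p)" by (rule thmI, rule der_thm[OF p])
  then show ?thesis using thmD[OF BM der_ax[OF ax_A4]] by blast
qed

lemma box_closure: "derives B c \<Longrightarrow> \<forall>\<psi>\<in>B. derives G (Box a \<psi>) \<Longrightarrow> derives G (Box a c)"
  by (induction rule: derives.induct) (auto intro: BT BK)

lemma NegMono: "theorem_of (Imp (Neg q) (Neg p)) \<Longrightarrow> theorem_of (Imp (Neg (Box r q)) (Neg (Box r p)))"
proof -
  assume qp: "theorem_of (Imp (Neg q) (Neg p))"
  have "theorem_of (Imp (Neg p) (Neg (Conj p q)))"
    by (rule thmI, rule NC2[OF dI1[OF hyp]])
  moreover have "theorem_of (Imp (Neg (Conj p q)) (Neg p))"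
    by (rule thmI, rule dE[OF NC1[OF hyp] der_imp_refl der_thm[OF qp]])
  ultimately have "theorem_of (Iff (Neg p) (Neg (Conj p q)))" by (rule thm_iff)
  then have rn: "theorem_of (Iff (Neg (Box r p)) (Neg (Box r (Conj p q))))" by (rule thm_RN)
  show ?thesis
    by (rule thmI, rule thiff2[OF rn axsiff_nimp[OF ax_A1 NC2[OF dI2[OF hyp]]]])
qed

lemma A3use: "derives G (Imp (Dia a q) (Box a c)) \<Longrightarrow> derives G (Box a (Imp q c))"
  using der_ax[OF ax_A3] der_mp by blast

lemma dia_conv: "derives G (Dia a (Neg \<psi>)) \<Longrightarrow> derives G (Neg (Box a \<psi>))"
proof -
  have "theorem_of (Iff (Neg (Neg (Neg \<psi>))) (Neg \<psi>))" by (rule thm_ax, rule ax_NN)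
  then have "theorem_of (Iff (Neg (Box a (Neg (Neg \<psi>)))) (Neg (Box a \<psi>)))" by (rule thm_RN)
  then show "derives G (Dia a (Neg \<psi>)) \<Longrightarrow> derives G (Neg (Box a \<psi>))"
    unfolding Dia_def by (rule thiff1)
qed

lemma imps_A3: "derives G (imps (map (Dia a) qs) (Box a c)) \<Longrightarrow> derives G (Box a (imps qs c))"
proof (induction qs arbitrary: G)
  case Nil then show ?case by simp
next
  case (Cons q qs)
  then have "derives (insert (Dia a q) G) (imps (map (Dia a) qs) (Box a c))"
    by (simp add: undeduction)
  then have "derives (insert (Dia a q) G) (Box a (imps qs c))" using Cons.IH by blast
  then have "derives G (Imp (Dia a q) (Box a (imps qs c)))" by (rule deduction)
  then show ?case by (simp add: A3use)
qed



lemma box_disj: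
  assumes pr: "\<forall>p q. Disj p q \<in> U \<longrightarrow> p \<in> U \<or> q \<in> U"
  shows "ds \<noteq> [] \<Longrightarrow> set ds \<subseteq> {Box a \<chi> | \<chi>. \<chi> \<notin> U} \<Longrightarrow>
     \<exists>\<chi>. \<chi> \<notin> U \<and> theorem_of (Imp (disjs ds) (Box a \<chi>))"
proof (induction ds rule: disjs.induct)
  case 1 then show ?case by simp
next
  case (2 p)
  then obtain \<chi> where c: "\<chi> \<notin> U" "p = Box a \<chi>" by auto
  have "theorem_of (Imp (disjs [p]) (Box a \<chi>))" using c der_empty[OF der_imp_refl refl] by simp
  then show ?case using c by blast
next
  case (3 p v va)
  then obtain \<chi>2 where c2: "\<chi>2 \<notin> U" "theorem_of (Imp (disjs (v # va)) (Box a \<chi>2))" by auto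
  obtain \<chi>1 where c1: "\<chi>1 \<notin> U" "p = Box a \<chi>1" using 3 by auto
  have nu: "Disj \<chi>1 \<chi>2 \<notin> U" using pr c1 c2 by blast
  have t1: "theorem_of (Imp (Box a \<chi>1) (Box a (Disj \<chi>1 \<chi>2)))" by (rule BM, rule thm_ax, rule ax_D1)
  have t2: "theorem_of (Imp (Box a \<chi>2) (Box a (Disj \<chi>1 \<chi>2)))" by (rule BM, rule thm_ax, rule ax_D2)
  have "theorem_of (Imp (disjs (p # v # va)) (Box a (Disj \<chi>1 \<chi>2)))"
    apply (simp add: c1(2))
    apply (rule thmI)
    apply (rule dE'[OF hyp])
     apply (rule thmD[OF t1 hyp])
    apply (rule thmD[OF t2 thmD[OF c2(2) hyp]])
    done
  then show ?case using nu by blast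
qed

fun conjs :: "'a fm list \<Rightarrow> 'a fm" where
  "conjs [] = Atom undefined"
| "conjs [p] = p"
| "conjs (p # ps) = Conj p (conjs ps)"

lemma disjs_neg_conjs: "\<psi>s \<noteq> [] \<Longrightarrow> derives G (Imp (disjs (map Neg \<psi>s)) (Neg (conjs \<psi>s)))"
proof (induction \<psi>s arbitrary: G rule: conjs.induct)
  case 1 then show ?case by simp
next
  case (2 p) then show ?case by (simp add: der_imp_refl)
next
  case (3 p v va)
  define D where "D = disjs (map Neg (v # va))"
  define K where "K = conjs (v # va)"
  have ih: "derives (insert D (insert (Disj (Neg p) D) G)) (Imp D (Neg K))"
    using 3 unfolding D_def K_def by blast
  have e1: "disjs (map Neg (p # v # va)) = Disj (Neg p) D" unfolding D_def by simp
  have e2: "conjs (p # v # va) = Conj p K" unfolding K_def by simp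
  have "derives G (Imp (Disj (Neg p) D) (Neg (Conj p K)))"
    apply (rule deduction)
    apply (rule dE'[OF hyp])
     apply (rule NC2[OF dI1[OF hyp]])
    apply (rule NC2[OF dI2])
    apply (rule der_mp[OF hyp ih])
    done
  then show ?case using e1 e2 by simp
qed

lemma neg_box_conjs: "w \<in> Wc \<Longrightarrow> \<psi>s \<noteq> [] \<Longrightarrow> Neg (Box a (conjs \<psi>s)) \<in> fst w \<Longrightarrow> \<exists>\<psi>\<in>set \<psi>s. Neg (Box a \<psi>) \<in> fst w"
proof (induction \<psi>s rule: conjs.induct)
  case 1 then show ?case by simp
next
  case (2 p) then show ?case by simp
next
  case (3 p v va)
  then have "derives (fst w) (Neg (Box a (Conj p (conjs (v # va)))))" by (simp add: der_hyp)
  then have "derives (fst w) (Disj (Neg (Box a p)) (Neg (Box a (conjs (v # va)))))"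
    by (rule NC1[OF axsiff_nimp2[OF ax_A1]])
  then have "Disj (Neg (Box a p)) (Neg (Box a (conjs (v # va)))) \<in> fst w"
    using wc_closed 3(2) by blast
  then have "Neg (Box a p) \<in> fst w \<or> Neg (Box a (conjs (v # va))) \<in> fst w"
    using wc_disj 3(2) by blast
  then show ?case using 3 by auto
qed

lemma map_of_set: "set qs \<subseteq> {f x | x. P x} \<Longrightarrow> \<exists>rs. qs = map f rs \<and> (\<forall>r\<in>set rs. P r)"
proof (induction qs)
  case Nil then show ?case by simp
next
  case (Cons q qs)
  then obtain rs where "qs = map f rs" "\<forall>r\<in>set rs. P r" by auto
  moreover obtain r where "q = f r" "P r" using Cons by auto
  ultimately have "q # qs = map f (r # rs) \<and> (\<forall>x\<in>set (r # rs). P x)" by simp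
  then show ?case by (rule exI)
qed

lemma imps_mem: "u \<in> Wc \<Longrightarrow> imps rs c \<in> fst u \<Longrightarrow> set rs \<subseteq> fst u \<Longrightarrow> c \<in> fst u"
proof -
  assume a: "u \<in> Wc" "imps rs c \<in> fst u" "set rs \<subseteq> fst u"
  have "derives (fst u \<union> set rs) c" by (rule imps_D, rule der_hyp, rule a(2))
  then have "derives (fst u) c" using a(3) by (simp add: Un_absorb2)
  then show ?thesis using a(1) wc_closed by blast
qed

lemma eq_thm: "{x \<in> Wc. a \<in> fst x} \<subseteq> {x \<in> Wc. b \<in> fst x} \<Longrightarrow> theorem_of (Imp a b)"
proof (rule ccontr)
  assume s: "{x \<in> Wc. a \<in> fst x} \<subseteq> {x \<in> Wc. b \<in> fst x}" and n: "\<not> theorem_of (Imp a b)"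
  have "\<not> derives {a} b" using n thmI by blast
  then have "\<not> bider {a} {b}" using bider_single by blast
  then obtain x where x: "x \<in> Wc" "{a} \<subseteq> fst x" "{b} \<subseteq> snd x" using lindenbaum by blast
  then have "b \<notin> fst x" using wc_disj_sub by blast
  then show False using s x by blast
qed



lemma w_conj: "w \<in> Wc \<Longrightarrow> Conj a b \<in> fst w \<longleftrightarrow> a \<in> fst w \<and> b \<in> fst w"
  by (meson cE1 cE2 cI der_hyp wc_closed)

lemma w_disj: "w \<in> Wc \<Longrightarrow> Disj a b \<in> fst w \<longleftrightarrow> a \<in> fst w \<or> b \<in> fst w"
  by (meson dI1 dI2 der_hyp wc_closed wc_disj)

lemma w_nn: "w \<in> Wc \<Longrightarrow> Neg (Neg a) \<in> fst w \<longleftrightarrow> a \<in> fst w"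
  by (meson NN1 NN2 der_hyp wc_closed)

lemma w_nconj: "w \<in> Wc \<Longrightarrow> Neg (Conj a b) \<in> fst w \<longleftrightarrow> Neg a \<in> fst w \<or> Neg b \<in> fst w"
  by (meson NC1 NC2 dI1 dI2 der_hyp wc_closed wc_disj)

lemma w_ndisj: "w \<in> Wc \<Longrightarrow> Neg (Disj a b) \<in> fst w \<longleftrightarrow> Neg a \<in> fst w \<and> Neg b \<in> fst w"
  by (meson ND1 ND2 cE1 cE2 cI der_hyp wc_closed)

lemma w_nimp: "w \<in> Wc \<Longrightarrow> Neg (Imp a b) \<in> fst w \<longleftrightarrow> a \<in> fst w \<and> Neg b \<in> fst w"
  by (meson NI1 NI2 cE1 cE2 cI der_hyp wc_closed)

lemma w_imp: "w \<in> Wc \<Longrightarrow> Imp a b \<in> fst w \<longleftrightarrow> (\<forall>v\<in>Wc. lec w v \<longrightarrow> a \<in> fst v \<longrightarrow> b \<in> fst v)"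
proof
  assume w: "w \<in> Wc" and i: "Imp a b \<in> fst w"
  show "\<forall>v\<in>Wc. lec w v \<longrightarrow> a \<in> fst v \<longrightarrow> b \<in> fst v"
  proof (intro ballI impI)
    fix v assume v: "v \<in> Wc" "lec w v" "a \<in> fst v"
    then have "Imp a b \<in> fst v" using i lec_def by blast
    then have "derives (fst v) b" using v der_hyp der_mp by blast
    then show "b \<in> fst v" using v wc_closed by blast
  qed
next
  assume w: "w \<in> Wc" and h: "\<forall>v\<in>Wc. lec w v \<longrightarrow> a \<in> fst v \<longrightarrow> b \<in> fst v"
  show "Imp a b \<in> fst w"
  proof (rule ccontr)
    assume n: "Imp a b \<notin> fst w"
    have "\<not> derives (insert a (fst w)) b"
      using n deduction wc_closed w by blast
    then have "\<not> bider (insert a (fst w)) {b}" using bider_single by blast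
    then obtain v where v: "v \<in> Wc" "insert a (fst w) \<subseteq> fst v" "{b} \<subseteq> snd v"
      using lindenbaum by blast
    then have "b \<notin> fst v" using wc_disj_sub by blast
    moreover have "lec w v" using v unfolding lec_def by auto
    ultimately show False using h v by blast
  qed
qed

abbreviation XS :: "'a fm \<Rightarrow> 'a bset set \<times> 'a bset set" where
  "XS a \<equiv> ({x \<in> Wc. a \<in> fst x}, {x \<in> Wc. Neg a \<in> fst x})"

lemma Rc_siff: "Rc v (XS a) u \<Longrightarrow> \<exists>\<phi>. theorem_of (SIff a \<phi>) \<and> {\<psi>. Box \<phi> \<psi> \<in> fst v} \<subseteq> fst u
        \<and> {Neg (Box \<phi> \<psi>) | \<psi>. Neg \<psi> \<in> fst u} \<subseteq> fst v"
proof -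
  assume "Rc v (XS a) u"
  then obtain \<phi> where p: "{x \<in> Wc. a \<in> fst x} = {x \<in> Wc. \<phi> \<in> fst x}"
     "{x \<in> Wc. Neg a \<in> fst x} = {x \<in> Wc. Neg \<phi> \<in> fst x}"
     "{\<psi>. Box \<phi> \<psi> \<in> fst v} \<subseteq> fst u" "{Neg (Box \<phi> \<psi>) | \<psi>. Neg \<psi> \<in> fst u} \<subseteq> fst v"
    unfolding Rc_def by auto
  have "theorem_of (SIff a \<phi>)"
    apply (rule thm_siff)
       apply (rule eq_thm, simp add: p(1))
      apply (rule eq_thm, simp add: p(1))
     apply (rule eq_thm, simp add: p(2))
    apply (rule eq_thm, simp add: p(2))
    done
  then show ?thesis using p by blast
qed

lemma box_pos_in: "w \<in> Wc \<Longrightarrow> Box a b \<in> fst w \<Longrightarrow> v \<in> Wc \<Longrightarrow> lec w v \<Longrightarrow> Rc v (XS a) u \<Longrightarrow> b \<in> fst u"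
proof -
  assume a: "w \<in> Wc" "Box a b \<in> fst w" "v \<in> Wc" "lec w v" "Rc v (XS a) u"
  then obtain \<phi> where p: "theorem_of (SIff a \<phi>)" "{\<psi>. Box \<phi> \<psi> \<in> fst v} \<subseteq> fst u"
    using Rc_siff by blast
  have "theorem_of (SIff (Box a b) (Box \<phi> b))" using p(1) by (rule thm_RA)
  moreover have "derives (fst v) (Box a b)" using a lec_def der_hyp by blast
  ultimately have "derives (fst v) (Box \<phi> b)" by (rule siff_imp)
  then have "Box \<phi> b \<in> fst v" using a(3) wc_closed by blast
  then show ?thesis using p(2) by blast
qed

lemma box_neg_in: "w \<in> Wc \<Longrightarrow> Rc w (XS a) u \<Longrightarrow> Neg b \<in> fst u \<Longrightarrow> Neg (Box a b) \<in> fst w"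
proof -
  assume a: "w \<in> Wc" "Rc w (XS a) u" "Neg b \<in> fst u"
  then obtain \<phi> where p: "theorem_of (SIff a \<phi>)" "{Neg (Box \<phi> \<psi>) | \<psi>. Neg \<psi> \<in> fst u} \<subseteq> fst w"
    using Rc_siff by blast
  have "theorem_of (SIff (Box a b) (Box \<phi> b))" using p(1) by (rule thm_RA)
  moreover have "derives (fst w) (Neg (Box \<phi> b))" using a p(2) der_hyp by blast
  ultimately have "derives (fst w) (Neg (Box a b))" by (rule siff_nimp2)
  then show ?thesis using a(1) wc_closed by blast
qed



lemma box_pos_out:
  assumes w: "w \<in> Wc" and nb: "Box a b \<notin> fst w"
  shows "\<exists>v\<in>Wc. lec w v \<and> (\<exists>u\<in>Wc. Rc v (XS a) u \<and> b \<notin> fst u)"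
proof -
  define B where "B = {\<psi>. Box a \<psi> \<in> fst w}"
  have "\<not> bider B {b}"
  proof
    assume "bider B {b}"
    then have "derives B b" by (rule bider_single)
    moreover have "\<forall>\<psi>\<in>B. derives (fst w) (Box a \<psi>)" unfolding B_def by (simp add: der_hyp)
    ultimately have "derives (fst w) (Box a b)" by (rule box_closure)
    then show False using nb w wc_closed by blast
  qed
  then obtain u where u: "u \<in> Wc" "B \<subseteq> fst u" "{b} \<subseteq> snd u" using lindenbaum by blast
  have bu: "b \<notin> fst u" using u wc_disj_sub by blast
  define G0 where "G0 = fst w \<union> {Dia a q | q. q \<in> fst u}"
  define D0 where "D0 = {Box a \<chi> | \<chi>. \<chi> \<notin> fst u}"
  have "\<not> bider G0 D0"
  proof
    assume "bider G0 D0"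
    then obtain ds where ds: "ds \<noteq> []" "set ds \<subseteq> D0" "derives G0 (disjs ds)"
      unfolding bider_def by blast
    have pr: "\<forall>p q. Disj p q \<in> fst u \<longrightarrow> p \<in> fst u \<or> q \<in> fst u" using u(1) wc_disj by blast
    obtain \<chi> where c: "\<chi> \<notin> fst u" "theorem_of (Imp (disjs ds) (Box a \<chi>))"
      using box_disj[OF pr ds(1)] ds(2) unfolding D0_def by blast
    have "derives G0 (Box a \<chi>)" using thmD[OF c(2) ds(3)] .
    then obtain qs where qs: "set qs \<subseteq> {Dia a q | q. q \<in> fst u}" "derives (fst w) (imps qs (Box a \<chi>))"
      using compact[of G0 "Box a \<chi>" "fst w" "{Dia a q | q. q \<in> fst u}"] unfolding G0_def by blast
    obtain rs where rs: "qs = map (Dia a) rs" "\<forall>r\<in>set rs. r \<in> fst u"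
      using map_of_set[OF qs(1)] by blast
    have "derives (fst w) (Box a (imps rs \<chi>))" using imps_A3 qs(2) rs(1) by blast
    then have "Box a (imps rs \<chi>) \<in> fst w" using w wc_closed by blast
    then have "imps rs \<chi> \<in> fst u" using u(2) B_def by blast
    then have "\<chi> \<in> fst u" using imps_mem[OF u(1)] rs(2) by blast
    then show False using c(1) by blast
  qed
  then obtain v where v: "v \<in> Wc" "G0 \<subseteq> fst v" "D0 \<subseteq> snd v" using lindenbaum by blast
  have lwv: "lec w v" using v G0_def unfolding lec_def by blast
  have r1: "{\<psi>. Box a \<psi> \<in> fst v} \<subseteq> fst u"
  proof
    fix \<psi> assume "\<psi> \<in> {\<psi>. Box a \<psi> \<in> fst v}"
    then have "Box a \<psi> \<notin> snd v" using v(1) wc_disj_sub by blast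
    then show "\<psi> \<in> fst u" using v(3) D0_def by blast
  qed
  have r2: "{Neg (Box a \<psi>) | \<psi>. Neg \<psi> \<in> fst u} \<subseteq> fst v"
  proof
    fix x assume "x \<in> {Neg (Box a \<psi>) | \<psi>. Neg \<psi> \<in> fst u}"
    then obtain \<psi> where x: "x = Neg (Box a \<psi>)" "Neg \<psi> \<in> fst u" by blast
    then have "Dia a (Neg \<psi>) \<in> fst v" using v(2) G0_def by blast
    then have "derives (fst v) (Neg (Box a \<psi>))" using dia_conv der_hyp by blast
    then show "x \<in> fst v" using x v(1) wc_closed by blast
  qed
  have "Rc v (XS a) u" unfolding Rc_def using v(1) u(1) r1 r2 by auto
  then show ?thesis using v(1) lwv u(1) bu by blast
qed

lemma box_neg_out:
  assumes w: "w \<in> Wc" and nb: "Neg (Box a b) \<in> fst w"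
  shows "\<exists>u\<in>Wc. Rc w (XS a) u \<and> Neg b \<in> fst u"
proof -
  define B where "B = {\<psi>. Box a \<psi> \<in> fst w}"
  define G0 where "G0 = insert (Neg b) B"
  define D0 where "D0 = {Neg \<psi> | \<psi>. Neg (Box a \<psi>) \<notin> fst w}"
  have "\<not> bider G0 D0"
  proof
    assume "bider G0 D0"
    then obtain ds where ds: "ds \<noteq> []" "set ds \<subseteq> D0" "derives G0 (disjs ds)"
      unfolding bider_def by blast
    have "set ds \<subseteq> {Neg \<psi> | \<psi>. Neg (Box a \<psi>) \<notin> fst w}" using ds(2) unfolding D0_def .
    from map_of_set[OF this] obtain \<psi>s where ps: "ds = map Neg \<psi>s" "\<forall>\<psi>\<in>set \<psi>s. Neg (Box a \<psi>) \<notin> fst w"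
      by blast
    have pne: "\<psi>s \<noteq> []" using ps ds by auto
    define Dd where "Dd = disjs ds"
    have "derives (insert (Neg b) B) Dd" using ds(3) unfolding G0_def Dd_def .
    then have "derives B (Imp (Neg b) Dd)" by (rule deduction)
    moreover have "\<forall>\<psi>\<in>B. derives (fst w) (Box a \<psi>)" unfolding B_def by (simp add: der_hyp)
    ultimately have bx: "derives (fst w) (Box a (Imp (Neg b) Dd))" by (rule box_closure)
    have "derives (fst w) (Neg (Box a (Disj b (Neg (Imp (Neg b) Dd)))))"
      by (rule der_mp[OF cI[OF der_hyp[OF nb] bx] der_ax[OF ax_A2]])
    moreover have "theorem_of (Imp (Neg (Disj b (Neg (Imp (Neg b) Dd)))) (Neg (conjs \<psi>s)))"
    proof (rule thmI)
      let ?H = "{Neg (Disj b (Neg (Imp (Neg b) Dd)))}"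
      have h: "derives ?H (Conj (Neg b) (Neg (Neg (Imp (Neg b) Dd))))" by (rule ND1, rule der_hyp, simp)
      have "derives ?H Dd" using der_mp[OF cE1[OF h] NN1[OF cE2[OF h]]] .
      moreover have "derives ?H (Imp Dd (Neg (conjs \<psi>s)))" using disjs_neg_conjs[OF pne] unfolding ps(1) Dd_def .
      ultimately show "derives ?H (Neg (conjs \<psi>s))" by (rule der_mp)
    qed
    ultimately have "derives (fst w) (Neg (Box a (conjs \<psi>s)))" using thmD[OF NegMono] by blast
    then have "Neg (Box a (conjs \<psi>s)) \<in> fst w" using w wc_closed by blast
    then show False using neg_box_conjs[OF w pne] ps(2) by blast
  qed
  then obtain u where u: "u \<in> Wc" "G0 \<subseteq> fst u" "D0 \<subseteq> snd u" using lindenbaum by blast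
  have r1: "{\<psi>. Box a \<psi> \<in> fst w} \<subseteq> fst u" using u(2) G0_def B_def by blast
  have r2: "{Neg (Box a \<psi>) | \<psi>. Neg \<psi> \<in> fst u} \<subseteq> fst w"
  proof
    fix x assume "x \<in> {Neg (Box a \<psi>) | \<psi>. Neg \<psi> \<in> fst u}"
    then obtain \<psi> where x: "x = Neg (Box a \<psi>)" "Neg \<psi> \<in> fst u" by blast
    then have "Neg \<psi> \<notin> snd u" using u(1) wc_disj_sub by blast
    then show "x \<in> fst w" using x u(3) D0_def by blast
  qed
  have "Rc w (XS a) u" unfolding Rc_def using w u(1) r1 r2 by auto
  then show ?thesis using u G0_def by blast
qed

lemma Mc_simps [simp]: "W Mc = Wc" "le Mc = lec" "R Mc = Rc"
  "Vp Mc = (\<lambda>p. {GD \<in> Wc. Atom p \<in> fst GD})" "Vn Mc = (\<lambda>p. {GD \<in> Wc. Neg (Atom p) \<in> fst GD})"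
  by (simp_all add: Mc_def)

lemma truth: "w \<in> Wc \<Longrightarrow> (sat Mc \<phi> True w \<longleftrightarrow> \<phi> \<in> fst w) \<and> (sat Mc \<phi> False w \<longleftrightarrow> Neg \<phi> \<in> fst w)"
proof (induction \<phi> arbitrary: w)
  case (Atom x) then show ?case by simp
next
  case (Conj a b) then show ?case by (simp add: w_conj w_nconj)
next
  case (Disj a b) then show ?case by (simp add: w_disj w_ndisj)
next
  case (Imp a b)
  have "sat Mc (Imp a b) True w \<longleftrightarrow> (\<forall>v\<in>Wc. lec w v \<longrightarrow> a \<in> fst v \<longrightarrow> b \<in> fst v)"
    using Imp.IH by simp
  then show ?case using Imp by (simp add: w_imp w_nimp)
next
  case (Neg a) then show ?case by (simp add: w_nn)
next
  case (Box a b)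
  have X1: "{x \<in> Wc. sat Mc a True x} = {x \<in> Wc. a \<in> fst x}" using Box.IH(1) by blast
  have X2: "{x \<in> Wc. sat Mc a False x} = {x \<in> Wc. Neg a \<in> fst x}" using Box.IH(1) by blast
  have pos: "sat Mc (Box a b) True w \<longleftrightarrow> (\<forall>v\<in>Wc. lec w v \<longrightarrow> (\<forall>u\<in>Wc. Rc v (XS a) u \<longrightarrow> b \<in> fst u))"
    using Box.IH(2) by (simp add: X1 X2)
  have neg: "sat Mc (Box a b) False w \<longleftrightarrow> (\<exists>u\<in>Wc. Rc w (XS a) u \<and> Neg b \<in> fst u)"
    using Box.IH(2) by (simp add: X1 X2)
  have "sat Mc (Box a b) True w \<longleftrightarrow> Box a b \<in> fst w"
    unfolding pos using box_pos_in[OF Box.prems] box_pos_out[OF Box.prems] by blast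
  moreover have "sat Mc (Box a b) False w \<longleftrightarrow> Neg (Box a b) \<in> fst w"
    unfolding neg using box_neg_in[OF Box.prems] box_neg_out[OF Box.prems] by blast
  ultimately show ?case by blast
qed

theorem lemma11:
  fixes \<phi> :: "'a fm" and \<Gamma> \<Delta> :: "'a fm set"
  assumes "(\<Gamma>, \<Delta>) \<in> Wc"
  shows "(sat Mc \<phi> True (\<Gamma>, \<Delta>) \<longleftrightarrow> \<phi> \<in> \<Gamma>) \<and> (sat Mc \<phi> False (\<Gamma>, \<Delta>) \<longleftrightarrow> Neg \<phi> \<in> \<Gamma>)"
  using truth[OF assms] by simp

end
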